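(* Let $S\subset\mathbb R^2$ be a finite set of $n>4$ points, none of which lies at the center $O$ of SED$(S)$. If $S$ is Pre-regular, then the cyclic order of the points of $S$ around $O$ coincides with the cyclic order of the points of $S$ around the center of the supporting polygon of $S$.
   Context: SED$(S)$ is the smallest closed disk containing $S$, SEC$(S)$ its boundary circle, and $O$ its center. $S$ is \emph{Pre-regular} if there is a regular $n$-gon $P$ (the supporting polygon) such that for every pair of adjacent edges of $P$, one of the two edges contains exactly two points of $S$ (possibly at its endpoints) and the relative interior of the other edge contains no point of $S$. *)

theory Defs
  imports "HOL-Analysis.Analysis"
begin

text \<open>The plane R^2 is identified with the complex numbers.\<close>

definition is_SED :: "complex set \<Rightarrow> complex \<Rightarrow> real \<Rightarrow> bool" where
  "is_SED S c r \<longleftrightarrow> S \<subseteq> cball c r \<and>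
     (\<forall>c' r'. S \<subseteq> cball c' r' \<longrightarrow> r \<le> r')"

definition poly_vertex :: "nat \<Rightarrow> complex \<Rightarrow> real \<Rightarrow> real \<Rightarrow> nat \<Rightarrow> complex" where
  "poly_vertex n C rho phi k = C + of_real rho * cis (phi + 2 * pi * real k / real n)"

definition poly_edge :: "nat \<Rightarrow> complex \<Rightarrow> real \<Rightarrow> real \<Rightarrow> nat \<Rightarrow> complex set" where
  "poly_edge n C rho phi k =
     closed_segment (poly_vertex n C rho phi (k mod n)) (poly_vertex n C rho phi (Suc k mod n))"

definition poly_edge_relint :: "nat \<Rightarrow> complex \<Rightarrow> real \<Rightarrow> real \<Rightarrow> nat \<Rightarrow> complex set" where
  "poly_edge_relint n C rho phi k =
     open_segment (poly_vertex n C rho phi (k mod n)) (poly_vertex n C rho phi (Suc k mod n))"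

definition supporting_polygon :: "complex set \<Rightarrow> complex \<Rightarrow> real \<Rightarrow> real \<Rightarrow> bool" where
  "supporting_polygon S C rho phi \<longleftrightarrow> rho > 0 \<and> card S \<ge> 3 \<and>
     (\<forall>k < card S.
        (card (S \<inter> poly_edge (card S) C rho phi k) = 2 \<and>
         S \<inter> poly_edge_relint (card S) C rho phi (Suc k) = {}) \<or>
        (card (S \<inter> poly_edge (card S) C rho phi (Suc k)) = 2 \<and>
         S \<inter> poly_edge_relint (card S) C rho phi k = {}))"

definition pre_regular :: "complex set \<Rightarrow> bool" where
  "pre_regular S \<longleftrightarrow> (\<exists>C rho phi. supporting_polygon S C rho phi)"

text \<open>Counterclockwise angle in [0, 2 pi) from the ray x->a to the ray x->b.\<close>
definition ccw_angle :: "complex \<Rightarrow> complex \<Rightarrow> complex \<Rightarrow> real" where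
  "ccw_angle x a b = (let t = Arg ((b - x) / (a - x)) in if t < 0 then t + 2 * pi else t)"

definition cyc_before :: "complex \<Rightarrow> complex \<Rightarrow> complex \<Rightarrow> complex \<Rightarrow> bool" where
  "cyc_before x a b c \<longleftrightarrow> ccw_angle x a b < ccw_angle x a c"

end

theory Submission
  imports Defs
begin


definition arg2 :: "complex \<Rightarrow> real" where
  "arg2 z = (if Arg z < 0 then Arg z + 2 * pi else Arg z)"

definition DD :: "complex \<Rightarrow> complex \<Rightarrow> complex \<Rightarrow> real" where
  "DD x a b = Im (cnj (a - x) * (b - x))"

lemma arg2_range: "0 \<le> arg2 z \<and> arg2 z < 2 * pi"
  using Arg_bounded[of z] by (auto simp: arg2_def)

lemma arg2_rcis: "rcis (cmod z) (arg2 z) = z"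
proof -
  have "cis (Arg z + 2*pi) = cis (Arg z)" using cis_mult[of "Arg z" "2*pi"] by simp
  then have "rcis (cmod z) (Arg z + 2*pi) = rcis (cmod z) (Arg z)"
    by (simp add: rcis_def cis_def)
  then show ?thesis using rcis_cmod_Arg[of z] by (simp add: arg2_def)
qed

lemma Im_arg2: "Im z = cmod z * sin (arg2 z)"
  using arg2_rcis[of z] by (metis Im_rcis)

lemma Im_prod_arg2: "Im (w * cnj u) = cmod w * cmod u * sin (arg2 w - arg2 u)"
proof -
  have "w * cnj u = rcis (cmod w) (arg2 w) * cnj (rcis (cmod u) (arg2 u))"
    using arg2_rcis by metis
  also have "\<dots> = rcis (cmod w * cmod u) (arg2 w - arg2 u)"
  proof -
    have "cis (arg2 w - arg2 u) = cis (arg2 w) * cis (- arg2 u)" by (simp add: cis_mult)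
    then show ?thesis by (simp add: rcis_def cis_cnj)
  qed
  finally show ?thesis by (simp add: Im_rcis)
qed

lemma sin_nonpos_range: "-pi < x \<Longrightarrow> x \<le> 0 \<Longrightarrow> sin x \<le> 0"
  using sin_ge_zero[of "-x"] by simp

lemma real_cyc:
  fixes \<alpha> \<beta> :: real
  assumes "0 \<le> \<alpha>" "\<alpha> < 2*pi" "0 \<le> \<beta>" "\<beta> < 2*pi"
    and "(sin \<alpha> > 0 \<and> sin (\<beta> - \<alpha>) > 0) \<or> (sin (\<beta> - \<alpha>) > 0 \<and> sin \<beta> < 0) \<or> (sin \<alpha> > 0 \<and> sin \<beta> < 0)"
  shows "\<alpha> < \<beta>"
proof (rule ccontr)
  assume nl: "\<not> \<alpha> < \<beta>"
  have s1: "sin \<alpha> > 0 \<Longrightarrow> \<alpha> < pi"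
    using sin_ge_zero[of "\<alpha> - pi"] assms by (smt (verit) sin_minus_pi)
  have s2: "sin \<beta> < 0 \<Longrightarrow> \<beta> > pi"
    using sin_ge_zero[of \<beta>] assms by linarith
  show False
  proof -
    { assume "sin \<alpha> > 0" "sin (\<beta> - \<alpha>) > 0"
      then have False using s1 sin_nonpos_range[of "\<beta> - \<alpha>"] nl assms by linarith }
    moreover
    { assume "sin (\<beta> - \<alpha>) > 0" "sin \<beta> < 0"
      then have False using s2 sin_nonpos_range[of "\<beta> - \<alpha>"] nl assms by linarith }
    moreover
    { assume "sin \<alpha> > 0" "sin \<beta> < 0"
      then have False using s1 s2 nl by linarith }
    ultimately show False using assms(5) by blast
  qed
qed

lemma cyc_two_pos:
  assumes "a \<noteq> x" "b \<noteq> x" "c \<noteq> x"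
    and h: "(DD x a b > 0 \<and> DD x b c > 0) \<or> (DD x b c > 0 \<and> DD x c a > 0) \<or> (DD x a b > 0 \<and> DD x c a > 0)"
  shows "cyc_before x a b c"
proof -
  define A B Cc where "A = a - x" and "B = b - x" and "Cc = c - x"
  define u w where "u = B / A" and "w = Cc / A"
  have A0: "A \<noteq> 0" "B \<noteq> 0" "Cc \<noteq> 0" using assms(1-3) by (auto simp: A_def B_def Cc_def)
  have nA: "cmod A ^ 2 > 0" using A0 by simp
  have u0: "u \<noteq> 0" "w \<noteq> 0" using A0 by (auto simp: u_def w_def)
  have eu: "u = B * cnj A / of_real (cmod A ^ 2)"
    unfolding u_def using complex_div_cnj[of B A] by (simp only: of_real_power)
  have ew: "w = Cc * cnj A / of_real (cmod A ^ 2)"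
    unfolding w_def using complex_div_cnj[of Cc A] by (simp only: of_real_power)
  have i1: "Im u = DD x a b / cmod A ^ 2"
    unfolding eu DD_def A_def[symmetric] B_def[symmetric] by (simp add: Im_divide_of_real mult.commute)
  have i2: "Im w = - DD x c a / cmod A ^ 2"
    unfolding ew DD_def A_def[symmetric] Cc_def[symmetric]
    by (simp add: Im_divide_of_real algebra_simps)
  have AA: "A * cnj A = of_real (cmod A ^ 2)" by (metis complex_norm_square of_real_power)
  have i3: "Im (w * cnj u) = DD x b c / cmod A ^ 2"
  proof -
    have "w * cnj u = (Cc * cnj B) / (A * cnj A)"
      unfolding u_def w_def by (simp add: times_divide_times_eq)
    then have "w * cnj u = Cc * cnj B / of_real (cmod A ^ 2)" using AA by simp
    then show ?thesis unfolding DD_def B_def[symmetric] Cc_def[symmetric]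
      by (simp add: Im_divide_of_real algebra_simps)
  qed
  have cu: "cmod u > 0" "cmod w > 0" using u0 by auto
  have e1: "sin (arg2 u) = DD x a b / (cmod A ^ 2 * cmod u)"
    using Im_arg2[of u] i1 cu nA by (simp add: field_simps)
  have e2: "sin (arg2 w) = - DD x c a / (cmod A ^ 2 * cmod w)"
    using Im_arg2[of w] i2 cu nA by (simp add: field_simps)
  have e3: "sin (arg2 w - arg2 u) = DD x b c / (cmod A ^ 2 * (cmod w * cmod u))"
    using Im_prod_arg2[of w u] i3 cu nA by (simp add: field_simps)
  have pp: "cmod A ^ 2 * cmod u > 0" "cmod A ^ 2 * cmod w > 0" "cmod A ^ 2 * (cmod w * cmod u) > 0"
    using cu nA by auto
  have sa: "sin (arg2 u) > 0 \<longleftrightarrow> DD x a b > 0"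
    unfolding e1 using pp by (simp add: zero_less_divide_iff)
  have sb: "sin (arg2 w) < 0 \<longleftrightarrow> DD x c a > 0"
    unfolding e2 using pp by (simp add: divide_less_0_iff zero_less_divide_iff)
  have sc: "sin (arg2 w - arg2 u) > 0 \<longleftrightarrow> DD x b c > 0"
    unfolding e3 using pp by (simp add: zero_less_divide_iff)
  have "arg2 u < arg2 w"
    apply (rule real_cyc)
    using arg2_range[of u] arg2_range[of w] sa sb sc h by auto
  then show ?thesis
    by (simp add: cyc_before_def ccw_angle_def arg2_def u_def w_def A_def B_def Cc_def Let_def)
qed



definition gaff :: "real \<Rightarrow> complex \<Rightarrow> complex \<Rightarrow> real" where
  "gaff \<beta> w z = \<beta> - Re (z * cnj w)"

definition samedir :: "complex \<Rightarrow> complex \<Rightarrow> complex \<Rightarrow> bool" where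
  "samedir x p q \<longleftrightarrow> (\<exists>k>0. q - x = of_real k * (p - x))"

lemma DD_sum: "DD x a b + DD x b c + DD x c a = DD a b c"
  by (simp add: DD_def algebra_simps)

lemma DD_cyc: "DD b c a = DD a b c"
  by (simp add: DD_def algebra_simps)

lemma DD_swap: "DD x a c = - DD x c a"
  by (simp add: DD_def algebra_simps)

lemma cone_identity:
  assumes "gaff \<beta> w b = 0"
  shows "DD a b c * gaff \<beta> w x = DD x b c * gaff \<beta> w a + DD x a b * gaff \<beta> w c"
  using assms by (simp add: DD_def gaff_def algebra_simps)

lemma cone:
  assumes "DD a b c > 0" "w \<noteq> 0" "gaff \<beta> w b = 0" "gaff \<beta> w a \<ge> 0" "gaff \<beta> w c \<ge> 0"
    "gaff \<beta> w x \<ge> 0"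
  shows "\<not> (DD x a b < 0 \<and> DD x b c < 0)"
proof
  assume n: "DD x a b < 0 \<and> DD x b c < 0"
  have id: "DD a b c * gaff \<beta> w x = DD x b c * gaff \<beta> w a + DD x a b * gaff \<beta> w c"
    by (rule cone_identity[OF assms(3)])
  have "DD a b c * gaff \<beta> w x \<ge> 0" using assms by simp
  moreover have "DD x b c * gaff \<beta> w a \<le> 0" "DD x a b * gaff \<beta> w c \<le> 0"
    using n assms by (auto simp: mult_nonpos_nonneg)
  ultimately have "DD x b c * gaff \<beta> w a = 0" "DD x a b * gaff \<beta> w c = 0" using id by linarith+
  then have ga: "gaff \<beta> w a = 0" "gaff \<beta> w c = 0" using n by auto
  have "DD a b c * gaff \<beta> w (b + w) = DD (b+w) b c * gaff \<beta> w a + DD (b+w) a b * gaff \<beta> w c"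
    by (rule cone_identity[OF assms(3)])
  then have "DD a b c * gaff \<beta> w (b + w) = 0" using ga by simp
  moreover have "gaff \<beta> w (b + w) = - (cmod w * cmod w)"
    using assms(3) by (simp add: gaff_def cmod_power2 algebra_simps power2_eq_square[symmetric])
  ultimately show False using assms(1,2) by simp
qed

lemma zero_case:
  assumes "DD x a b = 0" "a \<noteq> x" "b \<noteq> x" "\<not> samedir x a b" "DD a b c > 0"
  shows "DD x b c > 0 \<and> DD x c a > 0"
proof -
  define A B Cc where "A = a - x" and "B = b - x" and "Cc = c - x"
  have A0: "A \<noteq> 0" "B \<noteq> 0" using assms by (auto simp: A_def B_def)
  define k where "k = Re (cnj A * B) / (cmod A)^2"
  have im0: "Im (cnj A * B) = 0" using assms(1) by (simp add: DD_def A_def B_def)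
  have AA: "cnj A * A = of_real ((cmod A)^2)" by (metis complex_norm_square mult.commute of_real_power)
  have r: "cnj A * B = of_real (Re (cnj A * B))" using im0 by (simp add: complex_eq_iff)
  have "B = (cnj A * B) * A / (cnj A * A)" using A0 by (simp add: field_simps)
  also have "\<dots> = of_real (Re (cnj A * B)) * A / of_real ((cmod A)^2)" using r AA by simp
  also have "\<dots> = of_real k * A" by (simp add: k_def field_simps)
  finally have eB: "B = of_real k * A" .
  have "k \<noteq> 0" using eB A0 by auto
  moreover have "\<not> k > 0" using assms(4) eB by (auto simp: samedir_def A_def B_def)
  ultimately have kn: "k < 0" by simp
  have "DD x b c = k * DD x a c" unfolding DD_def B_def[symmetric] A_def[symmetric] eB
    by (simp add: algebra_simps)
  then have e: "DD x b c = - k * DD x c a" using DD_swap[of x a c] by simp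
  have "DD x b c + DD x c a > 0" using DD_sum[of x a b c] assms by simp
  then have "(1 - k) * DD x c a > 0" using e by (simp add: algebra_simps)
  then have "DD x c a > 0" using kn by (simp add: zero_less_mult_iff)
  then show ?thesis using e kn by (simp add: mult_neg_pos)
qed

definition supp :: "complex \<Rightarrow> complex \<Rightarrow> complex \<Rightarrow> complex \<Rightarrow> complex \<Rightarrow> bool" where
  "supp p a b c x \<longleftrightarrow> (\<exists>\<beta> w. w \<noteq> 0 \<and> gaff \<beta> w p = 0 \<and> gaff \<beta> w a \<ge> 0 \<and> gaff \<beta> w b \<ge> 0
      \<and> gaff \<beta> w c \<ge> 0 \<and> gaff \<beta> w x \<ge> 0)"

lemma two_pos:
  assumes "DD a b c > 0" "a \<noteq> x" "b \<noteq> x" "c \<noteq> x"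
    "\<not> samedir x a b" "\<not> samedir x b c" "\<not> samedir x c a"
    "supp a a b c x" "supp b a b c x" "supp c a b c x"
  shows "(DD x a b > 0 \<and> DD x b c > 0) \<or> (DD x b c > 0 \<and> DD x c a > 0) \<or> (DD x a b > 0 \<and> DD x c a > 0)"
proof -
  have o2: "DD b c a > 0" "DD c a b > 0" using assms(1) DD_cyc[of a b c] DD_cyc[of b c a] by auto
  show ?thesis
  proof (cases "DD x a b = 0 \<or> DD x b c = 0 \<or> DD x c a = 0")
    case True
    then show ?thesis
      using zero_case[of x a b c] zero_case[of x b c a] zero_case[of x c a b] assms o2 by auto
  next
    case False
    have n1: "\<not> (DD x a b < 0 \<and> DD x b c < 0)"
      using assms(9) cone[OF assms(1)] unfolding supp_def by blast
    have n2: "\<not> (DD x b c < 0 \<and> DD x c a < 0)"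
      using assms(10) cone[OF o2(1)] unfolding supp_def by blast
    have n3: "\<not> (DD x c a < 0 \<and> DD x a b < 0)"
      using assms(8) cone[OF o2(2)] unfolding supp_def by blast
    show ?thesis using False n1 n2 n3 by linarith
  qed
qed



lemma cos_shift_int: "cos (x + 2 * pi * of_int q) = cos x"
  by (simp add: cos_add)

lemma cis_shift_int: "cis (x + 2 * pi * of_int q) = cis x"
  by (simp add: cis.ctr cos_add sin_add)

lemma cos_odd:
  fixes d :: int and n :: nat
  assumes n3: "n \<ge> 3"
  shows "cos (pi * (2 * of_int d - 1) / n) \<le> cos (pi / n)
     \<and> (cos (pi * (2 * of_int d - 1) / n) = cos (pi / n) \<longrightarrow> d mod n = 0 \<or> d mod n = 1)"
proof -
  define m q where "m = d mod int n" and "q = d div int n"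
  have dm: "d = m + int n * q" by (simp add: m_def q_def)
  have m0: "0 \<le> m" "m < int n" using n3 by (auto simp: m_def)
  have npos: "real n > 0" using n3 by simp
  have e: "pi * (2 * of_int d - 1) / n = pi * (2 * of_int m - 1) / n + 2 * pi * of_int q"
    using npos unfolding dm by (simp add: field_simps)
  have ce: "cos (pi * (2 * of_int d - 1) / n) = cos (pi * (2 * of_int m - 1) / n)"
    unfolding e by (rule cos_shift_int)
  have pn: "0 < pi / n" "pi / n < pi" using npos n3 pi_gt_zero by (auto simp: field_simps)
  show ?thesis
  proof (cases "m \<le> 1")
    case True
    then have "m = 0 \<or> m = 1" using m0 by auto
    then show ?thesis
    proof
      assume "m = 0"
      then show ?thesis using ce by (simp add: m_def minus_divide_left[symmetric])
    next
      assume "m = 1"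
      then show ?thesis using ce by (simp add: m_def)
    qed
  next
    case False
    define y where "y = pi * (2 * of_int m - 1) / n"
    have m2: "m \<ge> 2" using False by simp
    have y1: "y \<ge> 3 * pi / n"
    proof -
      have "(3::real) \<le> 2 * of_int m - 1" using m2 by linarith
      then have "pi * 3 \<le> pi * (2 * of_int m - 1)" using pi_gt_zero by (intro mult_left_mono) auto
      then show ?thesis unfolding y_def using npos by (simp add: divide_right_mono mult.commute)
    qed
    have y2: "y \<le> 2 * pi - 3 * pi / n"
    proof -
      have "2 * of_int m - 1 \<le> 2 * real n - 3" using m0 by linarith
      then have "0 \<le> pi * (2 * real n - 3 - (2 * of_int m - 1)) / n"
        using pi_gt_zero npos by (intro divide_nonneg_nonneg mult_nonneg_nonneg) auto
      moreover have "2*pi - 3*pi/n - y = pi * (2 * real n - 3 - (2 * of_int m - 1)) / n"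
        unfolding y_def using npos by (simp add: field_simps)
      ultimately show ?thesis by linarith
    qed
    have lt: "3 * pi / n > pi / n" using npos by (simp add: divide_strict_right_mono)
    have "cos y < cos (pi / n)"
    proof (cases "y \<le> pi")
      case True
      then show ?thesis using cos_monotone_0_pi[of "pi/n" y] pn y1 lt by linarith
    next
      case False
      have "cos y = cos (2 * pi - y)" by simp
      also have "\<dots> < cos (pi / n)"
        using cos_monotone_0_pi[of "pi/n" "2*pi - y"] pn y2 lt False by linarith
      finally show ?thesis .
    qed
    then show ?thesis using ce unfolding y_def by simp
  qed
qed



lemma gaff_comb: "gaff \<beta> w ((1 - u) *\<^sub>R p + u *\<^sub>R q) = (1 - u) * gaff \<beta> w p + u * gaff \<beta> w q"
  by (simp add: gaff_def scaleR_conv_of_real algebra_simps)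

locale rpoly =
  fixes n :: nat and C :: complex and \<rho> \<phi> :: real
  assumes n3: "n \<ge> 3" and rho: "\<rho> > 0"
begin

definition v :: "nat \<Rightarrow> complex" where "v k = poly_vertex n C \<rho> \<phi> k"
definition nrm :: "nat \<Rightarrow> complex" where "nrm k = cis (\<phi> + 2 * pi * real k / real n + pi / real n)"
definition hh :: real where "hh = \<rho> * cos (pi / real n)"
definition gk :: "nat \<Rightarrow> complex \<Rightarrow> real" where
  "gk k = gaff (hh + Re (C * cnj (nrm k))) (nrm k)"

lemma npos: "real n > 0" using n3 by simp

lemma nrm_nz: "nrm k \<noteq> 0" by (simp add: nrm_def)

lemma gk_eq: "gk k z = hh - Re ((z - C) * cnj (nrm k))"
  by (simp add: gk_def gaff_def algebra_simps)

lemma gk_v: "gk k (v j) = hh - \<rho> * cos (pi * (2 * of_int (int j - int k) - 1) / n)"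
proof -
  have "(v j - C) * cnj (nrm k) = of_real \<rho> * (cis (\<phi> + 2 * pi * real j / real n) * cis (- (\<phi> + 2 * pi * real k / real n + pi / real n)))"
    by (simp add: v_def poly_vertex_def nrm_def cis_cnj)
  also have "\<dots> = of_real \<rho> * cis (pi * (2 * of_int (int j - int k) - 1) / n)"
  proof -
    have "\<phi> + 2 * pi * real j / real n + - (\<phi> + 2 * pi * real k / real n + pi / real n)
        = pi * (2 * of_int (int j - int k) - 1) / n" using npos by (simp add: field_simps)
    then show ?thesis by (simp add: cis_mult)
  qed
  finally show ?thesis by (simp add: gk_eq)
qed

lemma gk_v_nonneg: "gk k (v j) \<ge> 0"
  using cos_odd[OF n3, of "int j - int k"] rho unfolding gk_v hh_def
  by (simp add: mult_left_mono)

lemma gk_v_zero_mod: "gk k (v j) = 0 \<Longrightarrow> (int j - int k) mod n = 0 \<or> (int j - int k) mod n = 1"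
  using cos_odd[OF n3, of "int j - int k"] rho unfolding gk_v hh_def by auto

lemma v_cong:
  assumes "int j mod n = int k mod n"
  shows "v j = v k"
proof -
  obtain q where q: "int j - int k = int n * q"
    using assms by (metis dvd_def mod_eq_dvd_iff)
  have "\<phi> + 2 * pi * real j / real n = \<phi> + 2 * pi * real k / real n + 2 * pi * of_int q"
  proof -
    have "real j = real k + real n * of_int q" using q
      by (metis add.commute diff_add_cancel of_int_add of_int_mult of_int_of_nat_eq)
    then show ?thesis using npos by (simp add: field_simps)
  qed
  then have "cis (\<phi> + 2 * pi * real j / real n) = cis (\<phi> + 2 * pi * real k / real n)"
    using cis_shift_int[of "\<phi> + 2 * pi * real k / real n" q] by (simp add: add.assoc)
  then show ?thesis by (simp add: v_def poly_vertex_def)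
qed

lemma v_mod: "v (k mod n) = v k"
  by (rule v_cong) (simp add: zmod_int)

lemma gk_v_zero:
  assumes "gk k (v j) = 0"
  shows "v j = v k \<or> v j = v (Suc k)"
proof -
  from gk_v_zero_mod[OF assms] show ?thesis
  proof
    assume "(int j - int k) mod n = 0"
    then have "int j mod n = int k mod n" by (simp add: mod_eq_dvd_iff dvd_eq_mod_eq_0)
    then show ?thesis using v_cong by blast
  next
    assume h: "(int j - int k) mod n = 1"
    have "(int j - int k) mod int n = (1::int) mod int n" using h n3 by simp
    then have "int n dvd (int j - int k - 1)" by (simp only: mod_eq_dvd_iff)
    then have "int j mod n = int (Suc k) mod n" by (simp add: mod_eq_dvd_iff algebra_simps)
    then show ?thesis using v_cong by blast
  qed
qed

lemma gk_vk: "gk k (v k) = 0" "gk k (v (Suc k)) = 0"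
  by (simp_all add: gk_v hh_def minus_divide_left[symmetric])

lemma hh_pos: "hh > 0"
proof -
  have "pi * 2 < pi * real n" using n3 pi_gt_zero by simp
  then have "pi / real n < pi / 2" using npos by (simp add: field_simps)
  moreover have "- (pi / 2) < pi / real n" using npos pi_gt_zero by (smt (verit) divide_pos_pos)
  ultimately show ?thesis using cos_gt_zero_pi rho by (simp add: hh_def)
qed

lemma gk_C: "gk k C = hh" by (simp add: gk_eq)

end


context rpoly begin

definition seg :: "nat \<Rightarrow> complex set" where "seg k = closed_segment (v k) (v (Suc k))"
definition rel :: "nat \<Rightarrow> complex set" where "rel k = open_segment (v k) (v (Suc k))"

lemma poly_edge_seg: "poly_edge n C \<rho> \<phi> k = seg k"
  unfolding poly_edge_def seg_def using v_mod[of k] v_mod[of "Suc k"] by (simp add: v_def)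

lemma poly_relint_rel: "poly_edge_relint n C \<rho> \<phi> k = rel k"
  unfolding poly_edge_relint_def rel_def using v_mod[of k] v_mod[of "Suc k"] by (simp add: v_def)

lemma seg_mod: "seg (k mod n) = seg k"
  unfolding seg_def using v_mod[of k] v_mod[of "Suc k"] v_mod[of "Suc (k mod n)"]
  by (metis mod_Suc_eq)

lemma rel_mod: "rel (k mod n) = rel k"
  unfolding rel_def using v_mod[of k] v_mod[of "Suc k"] v_mod[of "Suc (k mod n)"]
  by (metis mod_Suc_eq)

lemma seg_g:
  assumes "z \<in> seg k"
  shows "gk k z = 0" "gk j z \<ge> 0"
proof -
  obtain u where u: "0 \<le> u" "u \<le> 1" "z = (1 - u) *\<^sub>R v k + u *\<^sub>R v (Suc k)"
    using assms unfolding seg_def in_segment by blast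
  have e: "gk i z = (1 - u) * gk i (v k) + u * gk i (v (Suc k))" for i
    unfolding u(3) gk_def gaff_comb by simp
  show "gk k z = 0" using e[of k] gk_vk by simp
  show "gk j z \<ge> 0" using e[of j] gk_v_nonneg[of j k] gk_v_nonneg[of j "Suc k"] u by simp
qed

lemma rel_seg: "rel k \<subseteq> seg k"
  unfolding rel_def seg_def by (rule segment_open_subset_closed)

lemma rel_g:
  assumes "z \<in> rel k" "gk j z = 0"
  shows "(int k - int j) mod n = 0"
proof -
  obtain u where u: "0 < u" "u < 1" "z = (1 - u) *\<^sub>R v k + u *\<^sub>R v (Suc k)"
    using assms unfolding rel_def in_segment by blast
  have e: "gk j z = (1 - u) * gk j (v k) + u * gk j (v (Suc k))"
    unfolding u(3) gk_def gaff_comb by simp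
  have a: "gk j (v k) \<ge> 0" "gk j (v (Suc k)) \<ge> 0" by (rule gk_v_nonneg)+
  have "(1 - u) * gk j (v k) \<ge> 0" "u * gk j (v (Suc k)) \<ge> 0" using a u by auto
  then have "(1 - u) * gk j (v k) = 0" "u * gk j (v (Suc k)) = 0" using e assms(2) by linarith+
  then have z: "gk j (v k) = 0" "gk j (v (Suc k)) = 0" using u by auto
  have m1: "(int k - int j) mod n = 0 \<or> (int k - int j) mod n = 1" using gk_v_zero_mod[OF z(1)] .
  have m2: "(int (Suc k) - int j) mod n = 0 \<or> (int (Suc k) - int j) mod n = 1" using gk_v_zero_mod[OF z(2)] .
  have e2: "(int (Suc k) - int j) mod n = ((int k - int j) mod n + 1) mod n"
    by (simp only: mod_add_left_eq) (simp add: algebra_simps)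
  show ?thesis
  proof (rule ccontr)
    assume "(int k - int j) mod int n \<noteq> 0"
    then have "(int k - int j) mod n = 1" using m1 by simp
    then have "(int (Suc k) - int j) mod n = 2" using e2 n3 by simp
    then show False using m2 by simp
  qed
qed

lemma mod_eq0_lt:
  assumes "j < n" "k < n" "(int k - int j) mod int n = 0"
  shows "j = k"
proof -
  obtain q where q: "int k - int j = int n * q" using assms(3) by (auto simp: dvd_eq_mod_eq_0[symmetric] dvd_def)
  have "q = 0"
  proof (rule ccontr)
    assume "q \<noteq> 0"
    then have "q \<ge> 1 \<or> q \<le> -1" by linarith
    then have "int n * q \<ge> int n \<or> int n * q \<le> - int n"
      by (metis mult.right_neutral mult_left_mono mult_minus_right of_nat_0_le_iff)
    then show False using q assms(1,2) by linarith
  qed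
  then show ?thesis using q by simp
qed

lemma v_distinct_Suc: "v k \<noteq> v (Suc k)"
proof
  assume e: "v k = v (Suc k)"
  have "gk (Suc k) (v k) = 0" using e gk_vk(1)[of "Suc k"] by simp
  then have "(int k - int (Suc k)) mod n = 0 \<or> (int k - int (Suc k)) mod n = 1" by (rule gk_v_zero_mod)
  moreover have "(int k - int (Suc k)) mod n = int n - 1" using n3 by (simp add: zmod_minus1)
  ultimately show False using n3 by auto
qed

lemma v_inj:
  assumes "j < n" "k < n" "v j = v k"
  shows "j = k"
proof -
  { fix j k assume jk: "j < n" "k < n" "v j = v k" "k \<le> j"
    have z: "gk k (v j) = 0" using jk gk_vk(1)[of k] by simp
    have "(int j - int k) mod n = int (j - k)" using jk by (simp add: of_nat_diff)
    then have d: "j - k = 0 \<or> j - k = 1" using gk_v_zero_mod[OF z] by auto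
    have "j = k"
    proof (rule ccontr)
      assume "j \<noteq> k"
      then have j1: "j = Suc k" using d jk by auto
      then show False using v_distinct_Suc[of k] jk by simp
    qed }
  then show ?thesis using assms by (metis nat_le_linear)
qed

lemma v_not_rel: "v j \<notin> rel k"
proof
  assume a: "v j \<in> rel k"
  then have "gk k (v j) = 0" using rel_seg seg_g by blast
  then have "v j = v k \<or> v j = v (Suc k)" by (rule gk_v_zero)
  then show False using a by (auto simp: rel_def open_segment_def)
qed

lemma rel_disj:
  assumes "j < n" "k < n" "j \<noteq> k"
  shows "rel j \<inter> rel k = {}"
proof -
  { fix z assume z: "z \<in> rel j" "z \<in> rel k"
    have "z \<in> seg j" using z(1) rel_seg by blast
    then have "gk j z = 0" by (rule seg_g)
    then have "(int k - int j) mod n = 0" by (rule rel_g[OF z(2)])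
    then have "j = k" by (rule mod_eq0_lt[OF assms(1,2)])
    then have False using assms(3) by simp }
  then show ?thesis by blast
qed

lemma seg_line:
  assumes "s \<in> seg j" "gk k s = 0"
  shows "s \<in> seg k"
proof -
  obtain u where u: "0 \<le> u" "u \<le> 1" "s = (1 - u) *\<^sub>R v j + u *\<^sub>R v (Suc j)"
    using assms unfolding seg_def in_segment by blast
  have e: "gk k s = (1 - u) * gk k (v j) + u * gk k (v (Suc j))"
    unfolding u(3) gk_def gaff_comb by simp
  have a: "gk k (v j) \<ge> 0" "gk k (v (Suc j)) \<ge> 0" by (rule gk_v_nonneg)+
  have "(1 - u) * gk k (v j) \<ge> 0" "u * gk k (v (Suc j)) \<ge> 0" using a u by auto
  then have z: "(1 - u) * gk k (v j) = 0" "u * gk k (v (Suc j)) = 0" using e assms(2) by linarith+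
  have inseg: "v i \<in> seg k" if "gk k (v i) = 0" for i
  proof -
    have "v i = v k \<or> v i = v (Suc k)" by (rule gk_v_zero[OF that])
    then show ?thesis unfolding seg_def by (metis ends_in_segment(1) ends_in_segment(2))
  qed
  show ?thesis
  proof (cases "u = 0")
    case True
    then have "s = v j" using u(3) by simp
    then show ?thesis using inseg assms(2) by simp
  next
    case False
    note F = this
    show ?thesis
    proof (cases "u = 1")
      case True
      then have "s = v (Suc j)" using u(3) by simp
      then show ?thesis using inseg assms(2) by simp
    next
      case False
      then have "1 - u \<noteq> 0" by simp
      then have g1: "gk k (v j) = 0" using z(1) by simp
      have g2: "gk k (v (Suc j)) = 0" using z(2) F by simp
      have "closed_segment (v j) (v (Suc j)) \<subseteq> seg k"
        by (rule closed_segment_subset[OF inseg[OF g1] inseg[OF g2]]) (simp add: seg_def)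
      then show ?thesis using assms(1) unfolding seg_def by blast
    qed
  qed
qed

lemma seg_split: "seg k = {v k} \<union> {v (Suc k)} \<union> rel k"
  unfolding seg_def rel_def open_segment_def by auto

lemma card_seg:
  assumes "finite S"
  shows "card (S \<inter> seg k) = card (S \<inter> {v k}) + card (S \<inter> {v (Suc k)}) + card (S \<inter> rel k)"
proof -
  have "S \<inter> seg k = ((S \<inter> {v k}) \<union> (S \<inter> {v (Suc k)})) \<union> (S \<inter> rel k)"
    using seg_split by auto
  moreover have "((S \<inter> {v k}) \<union> (S \<inter> {v (Suc k)})) \<inter> (S \<inter> rel k) = {}"
    using v_not_rel by auto
  moreover have "(S \<inter> {v k}) \<inter> (S \<inter> {v (Suc k)}) = {}" using v_distinct_Suc by auto
  ultimately show ?thesis using assms by (simp add: card_Un_disjoint)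
qed

end


lemma sum_shift_periodic:
  fixes f :: "nat \<Rightarrow> nat"
  assumes "\<And>k. f (k mod n) = f k" "n > 0"
  shows "(\<Sum>k<n. f (Suc k)) = (\<Sum>k<n. f k)"
proof -
  have "(\<Sum>k<Suc n. f k) = f 0 + (\<Sum>k<n. f (Suc k))" by (rule sum.lessThan_Suc_shift)
  moreover have "(\<Sum>k<Suc n. f k) = (\<Sum>k<n. f k) + f n" by simp
  moreover have "f n = f 0" using assms(1)[of n] by simp
  ultimately show ?thesis by simp
qed

context rpoly begin

lemma v_Suc_mod: "v (Suc (k mod n)) = v (Suc k)"
  by (metis mod_Suc_eq v_mod)

lemma all_on_boundary:
  assumes fin: "finite S" and cS: "card S = n"
    and P: "\<forall>k<n. (card (S \<inter> seg k) = 2 \<and> S \<inter> rel (Suc k) = {}) \<or>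
                   (card (S \<inter> seg (Suc k)) = 2 \<and> S \<inter> rel k = {})"
  shows "S \<subseteq> (\<Union>k<n. seg k)"
proof -
  define x where "x k = card (S \<inter> {v k})" for k
  define r where "r k = card (S \<inter> rel k)" for k
  define y where "y k = x (Suc k) + r k" for k
  have n0: "n > 0" using n3 by simp
  have xp: "x (k mod n) = x k" for k unfolding x_def using v_mod by simp
  have rp: "r (k mod n) = r k" for k unfolding r_def using rel_mod by simp
  have yp: "y (k mod n) = y k" for k unfolding y_def x_def using rp v_Suc_mod by simp
  have x1: "x k \<le> 1" for k
  proof -
    have "card (S \<inter> {v k}) \<le> card {v k}" by (rule card_mono) auto
    then show ?thesis by (simp add: x_def)
  qed
  have cs: "card (S \<inter> seg k) = x k + x (Suc k) + r k" for k
    unfolding x_def r_def by (rule card_seg[OF fin])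
  have Pk: "(card (S \<inter> seg k) = 2 \<and> r (Suc k) = 0) \<or> (card (S \<inter> seg (Suc k)) = 2 \<and> r k = 0)" for k
  proof -
    have "k mod n < n" using n0 by simp
    then have "(card (S \<inter> seg (k mod n)) = 2 \<and> S \<inter> rel (Suc (k mod n)) = {}) \<or>
                   (card (S \<inter> seg (Suc (k mod n))) = 2 \<and> S \<inter> rel (k mod n) = {})" using P by blast
    moreover have "seg (Suc (k mod n)) = seg (Suc k)" using seg_mod by (metis mod_Suc_eq)
    moreover have "rel (Suc (k mod n)) = rel (Suc k)" using rel_mod by (metis mod_Suc_eq)
    ultimately have "(card (S \<inter> seg k) = 2 \<and> S \<inter> rel (Suc k) = {}) \<or>
                   (card (S \<inter> seg (Suc k)) = 2 \<and> S \<inter> rel k = {})" using seg_mod rel_mod by metis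
    then show ?thesis using fin by (auto simp: r_def)
  qed
  have y0: "y (Suc k) = 2" if "y k = 0" for k
  proof -
    have a: "x (Suc k) = 0" "r k = 0" using that by (auto simp: y_def)
    have "\<not> card (S \<inter> seg k) = 2" using cs[of k] a x1[of k] by simp
    then have "card (S \<inter> seg (Suc k)) = 2" using Pk[of k] by blast
    then show ?thesis using cs[of "Suc k"] a by (simp add: y_def)
  qed
  have ineq: "y (Suc k) \<ge> (if y (Suc k) > 0 then 1 else 0) + (if y k = 0 then 1 else 0)" for k
    using y0[of k] by auto
  have "(\<Sum>k<n. (1::nat)) = (\<Sum>k<n. (if y k > 0 then 1 else 0)) + (\<Sum>k<n. (if y k = 0 then 1 else 0))"
    by (subst sum.distrib[symmetric]) (rule sum.cong, auto)
  also have "(\<Sum>k<n. (if y k > 0 then (1::nat) else 0)) = (\<Sum>k<n. (if y (Suc k) > 0 then 1 else 0))"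
    using sum_shift_periodic[of "\<lambda>k. if y k > 0 then (1::nat) else 0" n] yp n0 by simp
  also have "(\<Sum>k<n. (if y (Suc k) > 0 then 1 else 0)) + (\<Sum>k<n. (if y k = 0 then 1 else 0))
      = (\<Sum>k<n. (if y (Suc k) > 0 then 1 else 0) + (if y k = 0 then 1 else 0))"
    by (rule sum.distrib[symmetric])
  also have "\<dots> \<le> (\<Sum>k<n. y (Suc k))"
    by (rule sum_mono) (rule ineq)
  finally have s1: "(\<Sum>k<n. y (Suc k)) \<ge> n" by simp
  have "(\<Sum>k<n. y (Suc k)) = (\<Sum>k<n. y k)" by (rule sum_shift_periodic[of y n, OF yp n0])
  also have "\<dots> = (\<Sum>k<n. x (Suc k)) + (\<Sum>k<n. r k)" unfolding y_def by (rule sum.distrib)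
  also have "(\<Sum>k<n. x (Suc k)) = (\<Sum>k<n. x k)" by (rule sum_shift_periodic[of x n, OF xp n0])
  finally have s2: "(\<Sum>k<n. x k + r k) \<ge> n" using s1 by (simp add: sum.distrib)
  define W where "W k = (S \<inter> {v k}) \<union> (S \<inter> rel k)" for k
  have cW: "card (W k) = x k + r k" for k
  proof -
    have "(S \<inter> {v k}) \<inter> (S \<inter> rel k) = {}" using v_not_rel by auto
    then show ?thesis unfolding W_def x_def r_def using fin by (simp add: card_Un_disjoint)
  qed
  have disj: "W i \<inter> W j = {}" if "i \<in> {..<n}" "j \<in> {..<n}" "i \<noteq> j" for i j
  proof -
    have "v i \<noteq> v j" using v_inj that by auto
    moreover have "rel i \<inter> rel j = {}" using rel_disj that by auto
    ultimately show ?thesis unfolding W_def using v_not_rel by auto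
  qed
  have "card (\<Union>k<n. W k) = (\<Sum>k<n. card (W k))"
    by (rule card_UN_disjoint) (use fin disj in \<open>auto simp: W_def\<close>)
  then have cU: "card (\<Union>k<n. W k) \<ge> n" using s2 cW by simp
  have sub: "(\<Union>k<n. W k) \<subseteq> S \<inter> (\<Union>k<n. seg k)"
    unfolding W_def using rel_seg by (auto simp: seg_def)
  have "(\<Union>k<n. W k) = S"
    by (rule card_seteq[OF fin]) (use sub cU cS in auto)
  then show ?thesis using sub by blast
qed

end


lemma DD_swap2: "DD a c b = - DD a b c"
  by (simp add: DD_def algebra_simps)

lemma cyc_orient:
  assumes "x \<notin> S"
    and nsd: "\<forall>p\<in>S. \<forall>q\<in>S. p \<noteq> q \<longrightarrow> \<not> samedir x p q"
    and sup: "\<forall>p\<in>S. \<exists>\<beta> w. w \<noteq> 0 \<and> gaff \<beta> w p = 0 \<and> (\<forall>s\<in>S. gaff \<beta> w s \<ge> 0) \<and> gaff \<beta> w x \<ge> 0"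
    and abc: "a \<in> S" "b \<in> S" "c \<in> S" "a \<noteq> b" "b \<noteq> c" "a \<noteq> c"
    and nz: "DD a b c \<noteq> 0"
  shows "cyc_before x a b c \<longleftrightarrow> DD a b c > 0"
proof -
  have ne: "a \<noteq> x" "b \<noteq> x" "c \<noteq> x" using assms(1) abc by auto
  have sp: "supp p a b c x" if "p \<in> S" for p
    using sup that abc unfolding supp_def by blast
  have pos: "cyc_before x a b c" if o: "DD a b c > 0"
    and abc: "a \<in> S" "b \<in> S" "c \<in> S" "a \<noteq> b" "b \<noteq> c" "a \<noteq> c" for a b c
  proof -
    have ne: "a \<noteq> x" "b \<noteq> x" "c \<noteq> x" using assms(1) abc by auto
    have "supp a a b c x" "supp b a b c x" "supp c a b c x"
      using sup abc unfolding supp_def by blast+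
    then have "(DD x a b > 0 \<and> DD x b c > 0) \<or> (DD x b c > 0 \<and> DD x c a > 0) \<or> (DD x a b > 0 \<and> DD x c a > 0)"
      using two_pos[OF o ne] nsd abc by auto
    then show ?thesis using cyc_two_pos ne by blast
  qed
  show ?thesis
  proof (cases "DD a b c > 0")
    case True
    then show ?thesis using pos abc by blast
  next
    case False
    then have "DD a c b > 0" using nz DD_swap2[of a c b] by simp
    then have "cyc_before x a c b" using pos abc by blast
    then have "\<not> cyc_before x a b c" by (simp add: cyc_before_def)
    then show ?thesis using False by simp
  qed
qed

lemma cross_par:
  assumes "Im (cnj A * B) = 0" "A \<noteq> 0"
  shows "B = of_real (Re (cnj A * B) / (cmod A)^2) * A"
proof -
  have AA: "cnj A * A = of_real ((cmod A)^2)" by (metis complex_norm_square mult.commute of_real_power)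
  have r: "cnj A * B = of_real (Re (cnj A * B))" using assms(1) by (simp add: complex_eq_iff)
  have "B = (cnj A * B) * A / (cnj A * A)" using assms(2) by (simp add: field_simps)
  also have "\<dots> = of_real (Re (cnj A * B)) * A / of_real ((cmod A)^2)" using r AA by simp
  also have "\<dots> = of_real (Re (cnj A * B) / (cmod A)^2) * A" by (simp add: field_simps)
  finally show ?thesis .
qed

lemma sed_in_hull:
  assumes fin: "finite S" and ne: "S \<noteq> {}" and sed: "is_SED S Z r"
  shows "Z \<in> convex hull S"
proof (rule ccontr)
  assume nin: "Z \<notin> convex hull S"
  have "closed (convex hull S)" by (rule compact_imp_closed[OF finite_imp_compact_convex_hull[OF fin]])
  then obtain a b where ab: "inner a Z < b" "\<forall>x\<in>convex hull S. inner a x > b"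
    using separating_hyperplane_closed_point[OF convex_convex_hull _ nin] by blast
  have t: "inner a (s - Z) > 0" if "s \<in> S" for s
    using ab that hull_subset[of S convex] by (force simp: inner_diff_right)
  have a0: "a \<noteq> 0" using t ne by auto
  define m where "m = Min ((\<lambda>s. inner a (s - Z)) ` S)"
  have m0: "m > 0" unfolding m_def using fin ne t by (subst Min_gr_iff) auto
  have mle: "m \<le> inner a (s - Z)" if "s \<in> S" for s unfolding m_def using fin that by simp
  define e where "e = m / (norm a)^2"
  have e0: "e > 0" using m0 a0 by (simp add: e_def)
  have ema: "e * (norm a)^2 = m" using a0 by (simp add: e_def)
  define Q where "Q = Z + e *\<^sub>R a"
  have lt: "dist Q s < r" if "s \<in> S" for s
  proof -
    have sq: "(norm (s - Q))^2 = (norm (s - Z))^2 - 2 * e * inner a (s - Z) + e^2 * (norm a)^2"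
      unfolding Q_def power2_norm_eq_inner
      by (simp add: inner_diff_left inner_diff_right inner_add_left inner_add_right
          inner_commute algebra_simps power2_eq_square)
    have "e^2 * (norm a)^2 = e * m" using ema by (simp add: power2_eq_square)
    also have "\<dots> \<le> e * inner a (s - Z)" using mle[OF that] e0 by simp
    finally have "(norm (s - Q))^2 \<le> (norm (s - Z))^2 - e * inner a (s - Z)" using sq by simp
    also have "\<dots> < (norm (s - Z))^2" using e0 t[OF that] by simp
    also have "(norm (s - Z))^2 \<le> r^2"
    proof -
      have "dist Z s \<le> r" using sed that unfolding is_SED_def by auto
      then show ?thesis by (simp add: dist_norm norm_minus_commute power_mono)
    qed
    finally have "(norm (s - Q))^2 < r^2" .
    moreover have "r \<ge> 0"
    proof -
      have "dist Z s \<le> r" using sed that unfolding is_SED_def by auto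
      then show ?thesis using zero_le_dist[of Z s] by linarith
    qed
    ultimately show ?thesis by (simp add: dist_norm norm_minus_commute power_less_imp_less_base)
  qed
  define r' where "r' = Max ((\<lambda>s. dist Q s) ` S)"
  have "r' < r" unfolding r'_def using fin ne lt by (subst Max_less_iff) auto
  moreover have "S \<subseteq> cball Q r'" unfolding r'_def using fin by (auto simp: subset_iff)
  ultimately show False using sed unfolding is_SED_def by force
qed



lemma gaff_sum:
  assumes "finite S" "sum l S = 1"
  shows "gaff \<beta> w (\<Sum>s\<in>S. l s *\<^sub>R s) = (\<Sum>s\<in>S. l s * gaff \<beta> w s)"
proof -
  have "(\<Sum>s\<in>S. l s * gaff \<beta> w s) = (\<Sum>s\<in>S. l s * \<beta>) - (\<Sum>s\<in>S. l s * Re (s * cnj w))"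
    by (simp add: gaff_def right_diff_distrib sum_subtractf)
  also have "(\<Sum>s\<in>S. l s * \<beta>) = \<beta>" using assms(2) by (simp add: sum_distrib_right[symmetric])
  also have "(\<Sum>s\<in>S. l s * Re (s * cnj w)) = Re ((\<Sum>s\<in>S. l s *\<^sub>R s) * cnj w)"
    by (simp add: sum_distrib_right Re_sum scaleR_conv_of_real distrib_left mult.assoc)
  finally show ?thesis by (simp add: gaff_def)
qed

context rpoly begin

lemma main:
  assumes fin: "finite S" and cS: "card S = n"
    and P: "\<forall>k<n. (card (S \<inter> seg k) = 2 \<and> S \<inter> rel (Suc k) = {}) \<or>
                   (card (S \<inter> seg (Suc k)) = 2 \<and> S \<inter> rel k = {})"
    and sed: "is_SED S Oc r" and OS: "Oc \<notin> S"
  shows "\<forall>a\<in>S. \<forall>b\<in>S. \<forall>c\<in>S. a \<noteq> b \<and> b \<noteq> c \<and> a \<noteq> c \<longrightarrow>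
           (cyc_before Oc a b c \<longleftrightarrow> cyc_before C a b c)"
proof -
  have n0: "n > 0" using n3 by simp
  have bd: "S \<subseteq> (\<Union>k<n. seg k)" by (rule all_on_boundary[OF fin cS P])
  have onseg: "\<exists>k. s \<in> seg k" if "s \<in> S" for s using bd that by blast
  have gS: "gk j s \<ge> 0" if "s \<in> S" for s j using onseg[OF that] seg_g by blast
  have cap: "card (S \<inter> seg k) \<le> 2" for k
  proof -
    define j where "j = (k + n - 1) mod n"
    have j: "j < n" using n0 by (simp add: j_def)
    have sj: "Suc j mod n = k mod n" unfolding j_def using n0
      by (metis Suc_diff_1 add_gr_0 mod_Suc_eq mod_add_self2)
    have segk: "seg (Suc j) = seg k" using seg_mod[of "Suc j"] seg_mod[of k] sj by simp
    have relk: "rel (Suc j) = rel k" using rel_mod[of "Suc j"] rel_mod[of k] sj by simp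
    show ?thesis
    proof (cases "card (S \<inter> seg (Suc j)) = 2")
      case True then show ?thesis using segk by simp
    next
      case False
      then have "S \<inter> rel k = {}" using P j relk by blast
      then have sub: "S \<inter> seg k \<subseteq> {v k, v (Suc k)}" using seg_split by auto
      have "card (S \<inter> seg k) \<le> card {v k, v (Suc k)}" by (rule card_mono[OF _ sub]) simp
      also have "\<dots> \<le> 2" by (simp add: card_insert_if)
      finally show ?thesis .
    qed
  qed
  have three: False if "p \<in> S" "q \<in> S" "m \<in> S" "p \<noteq> q" "m \<noteq> p" "m \<noteq> q"
    "p \<in> seg k" "q \<in> seg k" "m \<in> seg k" for p q m k
  proof -
    have "{p, q, m} \<subseteq> S \<inter> seg k" using that by auto
    then have "card {p, q, m} \<le> card (S \<inter> seg k)" by (rule card_mono[OF finite_Int[OF disjI1[OF fin]]])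
    moreover have "card {p, q, m} = 3" using that by auto
    ultimately show False using cap[of k] by simp
  qed
  have betw: False if h: "p \<in> S" "q \<in> S" "m \<in> S" "p \<noteq> q" "m \<noteq> p" "m \<noteq> q"
    "m = (1 - u) *\<^sub>R p + u *\<^sub>R q" "0 < u" "u < 1" for p q m u
  proof -
    obtain k where mk: "m \<in> seg k" using onseg h by blast
    have "gk k m = 0" using seg_g(1)[OF mk] .
    moreover have "gk k m = (1 - u) * gk k p + u * gk k q" unfolding h(7) gk_def gaff_comb by simp
    moreover have "(1 - u) * gk k p \<ge> 0" "u * gk k q \<ge> 0" using gS h by auto
    ultimately have "(1 - u) * gk k p = 0" "u * gk k q = 0" by linarith+
    then have "gk k p = 0" "gk k q = 0" using h by auto
    then have "p \<in> seg k" "q \<in> seg k" using seg_line onseg h by blast+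
    then show False using three h mk by blast
  qed
  have nocol: "DD a b c \<noteq> 0" if h: "a \<in> S" "b \<in> S" "c \<in> S" "a \<noteq> b" "b \<noteq> c" "a \<noteq> c" for a b c
  proof
    assume d: "DD a b c = 0"
    define k where "k = Re (cnj (b - a) * (c - a)) / (cmod (b - a))^2"
    have d': "Im (cnj (b - a) * (c - a)) = 0" using d by (simp add: DD_def)
    have ck: "c - a = of_real k * (b - a)"
      unfolding k_def by (rule cross_par[OF d']) (use h in auto)
    have "k \<noteq> 0" using ck h by auto
    moreover have "k \<noteq> 1" using ck h by auto
    ultimately consider "k < 0" | "0 < k \<and> k < 1" | "k > 1" by linarith
    then show False
    proof cases
      case 1
      define u where "u = 1 / (1 - k)"
      have u: "0 < u" "u < 1" using 1 by (auto simp: u_def)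
      have uk: "of_real u * of_real (1 - k) = (1::complex)" using 1 by (simp add: u_def of_real_mult[symmetric])
      have u1: "1 - u = - k * u" using 1 by (simp add: u_def field_simps)
      have "(1 - u) *\<^sub>R b + u *\<^sub>R c = of_real u * (c - of_real k * b)"
        unfolding scaleR_conv_of_real u1 by (simp add: algebra_simps)
      also have "c - of_real k * b = of_real (1 - k) * a" using ck by (simp add: algebra_simps)
      also have "of_real u * (of_real (1 - k) * a) = a" using uk by (simp add: mult.assoc[symmetric])
      finally have "a = (1 - u) *\<^sub>R b + u *\<^sub>R c" by simp
      then show False using betw[of b c a u] h u by auto
    next
      case 2
      have "c = (1 - k) *\<^sub>R a + k *\<^sub>R b" using ck by (simp add: scaleR_conv_of_real algebra_simps)
      then show False using betw[of a b c k] h 2 by auto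
    next
      case 3
      define u where "u = 1 / k"
      have u: "0 < u" "u < 1" using 3 by (auto simp: u_def)
      have "b = (1 - u) *\<^sub>R a + u *\<^sub>R c"
      proof -
        have "c = a + of_real k * (b - a)" using ck by (simp add: algebra_simps)
        moreover have "k \<noteq> 0" using 3 by simp
        ultimately show ?thesis unfolding u_def scaleR_conv_of_real
          by (simp add: field_simps)
      qed
      then show False using betw[of a c b u] h u by auto
    qed
  qed
  have Sne: "S \<noteq> {}" using cS n3 by auto
  obtain l where l: "\<forall>s\<in>S. 0 \<le> l s" "sum l S = 1" "(\<Sum>s\<in>S. l s *\<^sub>R s) = Oc"
    using sed_in_hull[OF fin Sne sed] unfolding convex_hull_finite[OF fin] by blast
  have gOsum: "gk j Oc = (\<Sum>s\<in>S. l s * gk j s)" for j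
    unfolding gk_def l(3)[symmetric] by (rule gaff_sum[OF fin l(2)])
  have gO: "gk j Oc \<ge> 0" for j unfolding gOsum using l(1) gS by (auto intro: sum_nonneg)
  have gC: "gk j C > 0" for j using gk_C hh_pos by simp
  have sup: "\<forall>p\<in>S. \<exists>\<beta> w. w \<noteq> 0 \<and> gaff \<beta> w p = 0 \<and> (\<forall>s\<in>S. gaff \<beta> w s \<ge> 0) \<and> gaff \<beta> w x \<ge> 0"
    if gx: "\<forall>j. gk j x \<ge> 0" for x
  proof
    fix p assume "p \<in> S"
    then obtain k where k: "p \<in> seg k" using onseg by blast
    show "\<exists>\<beta> w. w \<noteq> 0 \<and> gaff \<beta> w p = 0 \<and> (\<forall>s\<in>S. gaff \<beta> w s \<ge> 0) \<and> gaff \<beta> w x \<ge> 0"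
      apply (rule exI[of _ "hh + Re (C * cnj (nrm k))"], rule exI[of _ "nrm k"])
      using nrm_nz seg_g(1)[OF k] gS gx unfolding gk_def by auto
  qed
  have CS: "C \<notin> S"
  proof
    assume "C \<in> S"
    then obtain k where "C \<in> seg k" using onseg by blast
    then show False using seg_g(1) gC[of k] by simp
  qed
  have bC: False if h: "p \<in> S" "q \<in> S" "p = (1 - u) *\<^sub>R C + u *\<^sub>R q" "0 < u" "u < 1" for p q u
  proof -
    obtain k where k: "p \<in> seg k" using onseg h by blast
    have "gk k p = (1 - u) * gk k C + u * gk k q" unfolding h(3) gk_def gaff_comb by simp
    moreover have "(1 - u) * gk k C > 0" using gC h by simp
    moreover have "u * gk k q \<ge> 0" using gS h by simp
    ultimately show False using seg_g(1)[OF k] by linarith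
  qed
  have bO: False if h: "p \<in> S" "q \<in> S" "p \<noteq> q" "p = (1 - u) *\<^sub>R Oc + u *\<^sub>R q" "0 < u" "u < 1" for p q u
  proof -
    obtain k where k: "p \<in> seg k" using onseg h by blast
    have "gk k p = (1 - u) * gk k Oc + u * gk k q" unfolding h(4) gk_def gaff_comb by simp
    moreover have "(1 - u) * gk k Oc \<ge> 0" "u * gk k q \<ge> 0" using gO gS h by auto
    ultimately have "(1 - u) * gk k Oc = 0" "u * gk k q = 0" using seg_g(1)[OF k] by linarith+
    then have gOk: "gk k Oc = 0" and "gk k q = 0" using h by auto
    then have qk: "q \<in> seg k" using seg_line onseg h by blast
    have terms: "\<forall>s\<in>S. l s * gk k s = 0"
      using gOsum[of k] gOk l(1) gS fin by (subst sum_nonneg_eq_0_iff[symmetric]) auto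
    have lz: "l s = 0" if s: "s \<in> S - {p, q}" for s
    proof (rule ccontr)
      assume "l s \<noteq> 0"
      then have "gk k s = 0" using terms s by auto
      then have "s \<in> seg k" using seg_line onseg s by blast
      then show False using three[of p q s k] h s k qk by auto
    qed
    have sub: "{p, q} \<subseteq> S" using h by auto
    have "Oc = (\<Sum>s\<in>{p,q}. l s *\<^sub>R s)"
      unfolding l(3)[symmetric] by (rule sum.mono_neutral_right[OF fin sub]) (use lz in auto)
    then have Oe: "Oc = l p *\<^sub>R p + l q *\<^sub>R q" using h by simp
    have "1 = (\<Sum>s\<in>{p,q}. l s)"
      unfolding l(2)[symmetric] by (rule sum.mono_neutral_right[OF fin sub]) (use lz in auto)
    then have ls: "l p + l q = 1" using h by simp
    have lp: "0 \<le> l p" "l p \<le> 1" using l(1) h ls by auto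
    have "Oc - q = l p *\<^sub>R (p - q)" using Oe ls by (simp add: algebra_simps scaleR_add_left[symmetric])
    also have "p - q = (1 - u) *\<^sub>R (Oc - q)" using h(4) by (simp add: algebra_simps)
    finally have "Oc - q = (l p * (1 - u)) *\<^sub>R (Oc - q)" by simp
    then have "(1 - l p * (1 - u)) *\<^sub>R (Oc - q) = 0" by (simp add: algebra_simps)
    moreover have "l p * (1 - u) < 1"
    proof -
      have "l p * (1 - u) \<le> 1 - u" using mult_right_mono[of "l p" 1 "1-u"] lp h(6) by simp
      then show ?thesis using h(5) by linarith
    qed
    ultimately have "Oc = q" by simp
    then show False using OS h by simp
  qed
  have nsd: "\<forall>p\<in>S. \<forall>q\<in>S. p \<noteq> q \<longrightarrow> \<not> samedir x p q"
    if bx: "\<And>p q u. p \<in> S \<Longrightarrow> q \<in> S \<Longrightarrow> p \<noteq> q \<Longrightarrow> p = (1 - u) *\<^sub>R x + u *\<^sub>R q \<Longrightarrow> 0 < u \<Longrightarrow> u < 1 \<Longrightarrow> False"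
    for x
  proof (intro ballI impI notI)
    fix p q assume pq: "p \<in> S" "q \<in> S" "p \<noteq> q" "samedir x p q"
    then obtain k where k: "k > 0" "q - x = of_real k * (p - x)" unfolding samedir_def by blast
    have "k \<noteq> 1" using k pq by auto
    then consider "k < 1" | "k > 1" by linarith
    then show False
    proof cases
      case 1
      have "q = (1 - k) *\<^sub>R x + k *\<^sub>R p" using k(2) by (simp add: scaleR_conv_of_real algebra_simps)
      then show False using bx[of q p k] pq k 1 by auto
    next
      case 2
      define u where "u = 1 / k"
      have u: "0 < u" "u < 1" using 2 by (auto simp: u_def)
      have "p = (1 - u) *\<^sub>R x + u *\<^sub>R q"
      proof -
        have "q = x + of_real k * (p - x)" using k(2) by (simp add: algebra_simps)
        moreover have "k \<noteq> 0" using 2 by simp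
        ultimately show ?thesis unfolding u_def scaleR_conv_of_real
          by (simp add: field_simps)
      qed
      then show False using bx[of p q u] pq u by auto
    qed
  qed
  have nsdC: "\<forall>p\<in>S. \<forall>q\<in>S. p \<noteq> q \<longrightarrow> \<not> samedir C p q"
    by (rule nsd) (use bC in blast)
  have nsdO: "\<forall>p\<in>S. \<forall>q\<in>S. p \<noteq> q \<longrightarrow> \<not> samedir Oc p q"
    by (rule nsd) (use bO in blast)
  have supC: "\<forall>p\<in>S. \<exists>\<beta> w. w \<noteq> 0 \<and> gaff \<beta> w p = 0 \<and> (\<forall>s\<in>S. gaff \<beta> w s \<ge> 0) \<and> gaff \<beta> w C \<ge> 0"
    by (rule sup) (use gC less_imp_le in blast)
  have supO: "\<forall>p\<in>S. \<exists>\<beta> w. w \<noteq> 0 \<and> gaff \<beta> w p = 0 \<and> (\<forall>s\<in>S. gaff \<beta> w s \<ge> 0) \<and> gaff \<beta> w Oc \<ge> 0"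
    by (rule sup) (use gO in blast)
  show ?thesis
  proof (intro ballI impI)
    fix a b c assume abc: "a \<in> S" "b \<in> S" "c \<in> S" "a \<noteq> b \<and> b \<noteq> c \<and> a \<noteq> c"
    have nz: "DD a b c \<noteq> 0" using nocol abc by blast
    have "cyc_before Oc a b c \<longleftrightarrow> DD a b c > 0"
      using cyc_orient[OF OS nsdO supO] abc nz by blast
    moreover have "cyc_before C a b c \<longleftrightarrow> DD a b c > 0"
      using cyc_orient[OF CS nsdC supC] abc nz by blast
    ultimately show "cyc_before Oc a b c \<longleftrightarrow> cyc_before C a b c" by simp
  qed
qed
end

theorem lemma5p9:
  fixes S :: "complex set" and O_S :: complex and r :: real
    and C :: complex and rho phi :: real
  assumes "finite S" and "card S > 4"
    and "is_SED S O_S r" and "O_S \<notin> S"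
    and "supporting_polygon S C rho phi"
  shows "\<forall>a\<in>S. \<forall>b\<in>S. \<forall>c\<in>S. a \<noteq> b \<and> b \<noteq> c \<and> a \<noteq> c \<longrightarrow>
           (cyc_before O_S a b c \<longleftrightarrow> cyc_before C a b c)"
proof -
  have sp: "rho > 0" "card S \<ge> 3"
    and P: "\<forall>k < card S.
        (card (S \<inter> poly_edge (card S) C rho phi k) = 2 \<and>
         S \<inter> poly_edge_relint (card S) C rho phi (Suc k) = {}) \<or>
        (card (S \<inter> poly_edge (card S) C rho phi (Suc k)) = 2 \<and>
         S \<inter> poly_edge_relint (card S) C rho phi k = {})"
    using assms(5) unfolding supporting_polygon_def by auto
  interpret rpoly "card S" C rho phi by unfold_locales (use sp in auto)
  have P': "\<forall>k<card S. (card (S \<inter> seg k) = 2 \<and> S \<inter> rel (Suc k) = {}) \<or>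
                   (card (S \<inter> seg (Suc k)) = 2 \<and> S \<inter> rel k = {})"
    using P unfolding poly_edge_seg poly_relint_rel .
  show ?thesis by (rule main[OF assms(1) refl P' assms(3,4)])
qed

end
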